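(* Assume the Margin assumption with $y_*\in\mathbb{R}^d_+$, Boundedness, and that the selection $v$ satisfies $v(y)\in\mathbb{R}^d_+$ for all $y\in\mathbb{R}^d_+$. For agents $A_0,\dots,A_T\in\mathcal{A}$, let $(y_t,b_t)$ be generated by the projected strategic perceptron with $\mathbb{L}=\mathbb{R}^d_+\times\mathbb{R}$ and $\gamma=1$. Then $$\sum_{t\in\mathcal{M}_T}L_{\mathrm{hinge}}\Big(\big(\tfrac{y_*}{d_*\|y_*\|_*},\tfrac{b_*}{d_*\|y_*\|_*}\big);(s(A_t,y_t,b_t),1),\ell(A_t)\Big)\le0,$$ and consequently $$|\mathcal{M}_T|\le\frac{(\|y_*\|_2^2+b_*^2)(\widetilde D^2+1)}{\|y_*\|_*^2\,d_*^2}.$$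
   Context: Setting: $\mathcal{A}\subseteq\mathbb{R}^d$, labels $\ell(A)\in\{\pm1\}$; $\operatorname{sign}(0)=+1$; norm $\|\cdot\|$ with dual $\|y\|_*=\max_{\|w\|\le1}y^\top w$; constant $c>0$; a fixed selection $v$ with $v(0)=0$ and $v(y)\in\arg\max_{\|w\|\le1}y^\top w$ for $y\ne0$, with $v(\lambda y)=v(y)$ for $\lambda>0$. Predicted label $\hat\ell(x,y,b)=\operatorname{sign}(y^\top x+b-2\|y\|_*/c)$. Response: for $y\ne0$, $r(A,y,b)=A+(\tfrac2c-\tfrac{y^\top A+b}{\|y\|_*})v(y)$ if $0\le\tfrac{y^\top A+b}{\|y\|_*}<\tfrac2c$, else $A$. Proxy: for $y\ne0$, $s(A,y,b)=A-\tfrac{y^\top A+b}{\|y\|_*}v(y)$ if $0\le\tfrac{y^\top A+b}{\|y\|_*}<\tfrac2c$ and $\ell(A)=-1$; $=A+(\tfrac2c-\tfrac{y^\top A+b}{\|y\|_*})v(y)$ if the range condition holds and $\ell(A)=+1$; $=A$ otherwise; $r(A,0,b)=s(A,0,b)=A$. Margin assumption: $d_*:=\max_{y\ne0,b}\min_{A\in\mathcal{A}}\ell(A)\frac{y^\top A+b}{\|y\|_*}$ attained at $(y_*,b_* )$, $y_*\ne0$, $d_*>0$. Boundedness: $D:=\sup_{A\in\mathcal{A}}\|A\|_2<\infty$; $C_{\|\cdot\|}=\max_y\|v(y)\|_2$; $\widetilde D=D+\tfrac2cC_{\|\cdot\|}$. Hinge loss $L_{\mathrm{hinge}}(q;\xi,\ell)=\max\{0,1-\ell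 q^\top\xi\}$. Projected strategic perceptron with closed convex cone $\mathbb{L}$ and stepsize $\gamma$: $q_0=(y_0,b_0)=(0,0)$; for $t=0,\dots,T$: agent $A_t$ is shown $(y_t,b_t)$, responds $r(A_t,y_t,b_t)$, is predicted $\hat\ell(r(A_t,y_t,b_t),y_t,b_t)$; with $\xi_t=(s(A_t,y_t,b_t),1)$, $z_{t+1}=q_t+\gamma\ell(A_t)\xi_t$ on a mistake, else $z_{t+1}=q_t$; $q_{t+1}=(y_{t+1},b_{t+1})=\Pi_{\mathbb{L}}(z_{t+1})$ (Euclidean projection). Mistake set $\mathcal{M}_T=\{t\in\{0,\dots,T\}:\hat\ell(r(A_t,y_t,b_t),y_t,b_t)\ne\ell(A_t)\}$. *)

theory Defs
  imports "HOL-Analysis.Analysis"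
begin

definition is_norm_fun :: "(real ^ 'd \<Rightarrow> real) \<Rightarrow> bool" where
  "is_norm_fun nrm \<longleftrightarrow>
     (\<forall>x y. nrm (x + y) \<le> nrm x + nrm y) \<and>
     (\<forall>a x. nrm (a *\<^sub>R x) = \<bar>a\<bar> * nrm x) \<and>
     (\<forall>x. nrm x = 0 \<longleftrightarrow> x = 0)"

definition dual_norm :: "(real ^ 'd \<Rightarrow> real) \<Rightarrow> real ^ 'd \<Rightarrow> real" where
  "dual_norm nrm y = (SUP w\<in>{w. nrm w \<le> 1}. y \<bullet> w)"

definition is_selection :: "(real ^ 'd \<Rightarrow> real) \<Rightarrow> (real ^ 'd \<Rightarrow> real ^ 'd) \<Rightarrow> bool" where
  "is_selection nrm v \<longleftrightarrow>
     v 0 = 0 \<and>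
     (\<forall>y. y \<noteq> 0 \<longrightarrow> nrm (v y) \<le> 1 \<and> y \<bullet> v y = dual_norm nrm y) \<and>
     (\<forall>y (a::real). a > 0 \<longrightarrow> v (a *\<^sub>R y) = v y)"

definition sgn1 :: "real \<Rightarrow> real" where
  "sgn1 x = (if x \<ge> 0 then 1 else -1)"

definition pred_label :: "(real ^ 'd \<Rightarrow> real) \<Rightarrow> real \<Rightarrow> real ^ 'd \<Rightarrow> real ^ 'd \<Rightarrow> real \<Rightarrow> real" where
  "pred_label nrm c x y b = sgn1 (y \<bullet> x + b - 2 * dual_norm nrm y / c)"

definition response :: "(real ^ 'd \<Rightarrow> real) \<Rightarrow> real \<Rightarrow> (real ^ 'd \<Rightarrow> real ^ 'd)
    \<Rightarrow> real ^ 'd \<Rightarrow> real ^ 'd \<Rightarrow> real \<Rightarrow> real ^ 'd" where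
  "response nrm c v A y b =
     (if y = 0 then A
      else (let u = (y \<bullet> A + b) / dual_norm nrm y in
            if 0 \<le> u \<and> u < 2 / c then A + (2 / c - u) *\<^sub>R v y else A))"

definition proxy :: "(real ^ 'd \<Rightarrow> real) \<Rightarrow> real \<Rightarrow> (real ^ 'd \<Rightarrow> real ^ 'd)
    \<Rightarrow> (real ^ 'd \<Rightarrow> real) \<Rightarrow> real ^ 'd \<Rightarrow> real ^ 'd \<Rightarrow> real \<Rightarrow> real ^ 'd" where
  "proxy nrm c v lab A y b =
     (if y = 0 then A
      else (let u = (y \<bullet> A + b) / dual_norm nrm y in
            if 0 \<le> u \<and> u < 2 / c \<and> lab A = -1 then A - u *\<^sub>R v y
            else if 0 \<le> u \<and> u < 2 / c \<and> lab A = 1 then A + (2 / c - u) *\<^sub>R v y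
            else A))"

definition is_mistake :: "(real ^ 'd \<Rightarrow> real) \<Rightarrow> real \<Rightarrow> (real ^ 'd \<Rightarrow> real ^ 'd)
    \<Rightarrow> (real ^ 'd \<Rightarrow> real) \<Rightarrow> real ^ 'd \<Rightarrow> (real ^ 'd) \<times> real \<Rightarrow> bool" where
  "is_mistake nrm c v lab A q =
     (pred_label nrm c (response nrm c v A (fst q) (snd q)) (fst q) (snd q) \<noteq> lab A)"

primrec perceptron :: "(real ^ 'd \<Rightarrow> real) \<Rightarrow> real \<Rightarrow> (real ^ 'd \<Rightarrow> real ^ 'd)
    \<Rightarrow> (real ^ 'd \<Rightarrow> real) \<Rightarrow> ((real ^ 'd) \<times> real) set \<Rightarrow> real \<Rightarrow> (nat \<Rightarrow> real ^ 'd)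
    \<Rightarrow> nat \<Rightarrow> (real ^ 'd) \<times> real" where
  "perceptron nrm c v lab L \<gamma> A 0 = (0, 0)"
| "perceptron nrm c v lab L \<gamma> A (Suc t) =
     (let q = perceptron nrm c v lab L \<gamma> A t;
          \<xi> = (proxy nrm c v lab (A t) (fst q) (snd q), 1 :: real);
          z = (if is_mistake nrm c v lab (A t) q then q + (\<gamma> * lab (A t)) *\<^sub>R \<xi> else q)
      in closest_point L z)"

definition mistake_set :: "(real ^ 'd \<Rightarrow> real) \<Rightarrow> real \<Rightarrow> (real ^ 'd \<Rightarrow> real ^ 'd)
    \<Rightarrow> (real ^ 'd \<Rightarrow> real) \<Rightarrow> ((real ^ 'd) \<times> real) set \<Rightarrow> real \<Rightarrow> (nat \<Rightarrow> real ^ 'd)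
    \<Rightarrow> nat \<Rightarrow> nat set" where
  "mistake_set nrm c v lab L \<gamma> A T =
     {t \<in> {0..T}. is_mistake nrm c v lab (A t) (perceptron nrm c v lab L \<gamma> A t)}"

definition hinge :: "(real ^ 'd) \<times> real \<Rightarrow> (real ^ 'd) \<times> real \<Rightarrow> real \<Rightarrow> real" where
  "hinge q \<xi> l = max 0 (1 - l * (q \<bullet> \<xi>))"

definition nonneg_orthant :: "(real ^ 'd) set" where
  "nonneg_orthant = {y. \<forall>i. 0 \<le> y $ i}"

definition margin_of :: "(real ^ 'd \<Rightarrow> real) \<Rightarrow> (real ^ 'd \<Rightarrow> real) \<Rightarrow> (real ^ 'd) set
    \<Rightarrow> real ^ 'd \<Rightarrow> real \<Rightarrow> real" where
  "margin_of nrm lab \<A> y b = (INF A\<in>\<A>. lab A * (y \<bullet> A + b) / dual_norm nrm y)"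

end

theory Submission imports Defs begin

lemma nrm_basic:
  assumes "is_norm_fun nrm"
  shows "nrm 0 = 0" "nrm x \<ge> 0" "nrm (- x) = nrm x" "nrm (x - y) \<ge> nrm x - nrm y"
proof -
  have h: "\<And>a x. nrm (a *\<^sub>R x) = \<bar>a\<bar> * nrm x" and t: "\<And>x y. nrm (x + y) \<le> nrm x + nrm y"
    using assms unfolding is_norm_fun_def by auto
  show z: "nrm 0 = 0" using h[of 0 0] by simp
  show n: "nrm (- x) = nrm x" using h[of "-1" x] by simp
  show "nrm x \<ge> 0" using t[of x "-x"] z n by simp
  show "nrm (x - y) \<ge> nrm x - nrm y" using t[of "x - y" y] by simp
qed

lemma nrm_sum:
  assumes "is_norm_fun nrm" "finite S"
  shows "nrm (sum f S) \<le> (\<Sum>i\<in>S. nrm (f i))"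
  using assms(2)
proof (induction S rule: finite_induct)
  case empty then show ?case using nrm_basic[OF assms(1)] by simp
next
  case (insert x F)
  have "nrm (f x + sum f F) \<le> nrm (f x) + nrm (sum f F)"
    using assms(1) unfolding is_norm_fun_def by blast
  then show ?case using insert by simp
qed

lemma nrm_upper:
  fixes nrm :: "real ^ 'd \<Rightarrow> real"
  assumes "is_norm_fun nrm"
  shows "nrm x \<le> (\<Sum>i\<in>UNIV. nrm (axis i 1)) * norm x"
proof -
  have h: "\<And>a x. nrm (a *\<^sub>R x) = \<bar>a\<bar> * nrm x"
    using assms unfolding is_norm_fun_def by auto
  have "nrm x = nrm (\<Sum>i\<in>UNIV. x$i *\<^sub>R axis i 1)"
    using basis_expansion[of x] by (simp add: scalar_mult_eq_scaleR)
  also have "\<dots> \<le> (\<Sum>i\<in>UNIV. nrm (x$i *\<^sub>R axis i (1::real)))"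
    by (rule nrm_sum[OF assms]) simp
  also have "\<dots> = (\<Sum>i\<in>UNIV. \<bar>x$i\<bar> * nrm (axis i 1))" by (simp add: h)
  also have "\<dots> \<le> (\<Sum>i\<in>UNIV. norm x * nrm (axis i 1))"
    by (rule sum_mono, rule mult_right_mono) (auto simp: component_le_norm_cart nrm_basic[OF assms])
  finally show ?thesis by (simp add: sum_distrib_left mult.commute)
qed

lemma nrm_cont:
  fixes nrm :: "real ^ 'd \<Rightarrow> real"
  assumes "is_norm_fun nrm"
  shows "continuous_on UNIV nrm"
proof -
  define M where "M = (\<Sum>i\<in>UNIV. nrm (axis i (1::real)))"
  have M0: "M \<ge> 0" unfolding M_def by (rule sum_nonneg) (simp add: nrm_basic[OF assms])
  have L: "\<bar>nrm x - nrm y\<bar> \<le> M * norm (x - y)" for x y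
  proof -
    have "nrm x - nrm y \<le> nrm (x - y)" using nrm_basic(4)[OF assms, of x y] by simp
    moreover have "nrm y - nrm x \<le> nrm (y - x)" using nrm_basic(4)[OF assms, of y x] by simp
    moreover have "nrm (y - x) = nrm (x - y)" using nrm_basic(3)[OF assms, of "x - y"] by simp
    moreover have "nrm (x - y) \<le> M * norm (x - y)" unfolding M_def by (rule nrm_upper[OF assms])
    ultimately show ?thesis by linarith
  qed
  show ?thesis
    unfolding continuous_on_iff
  proof (intro ballI allI impI)
    fix x :: "real^'d" and e :: real assume "e > 0"
    show "\<exists>d>0. \<forall>x'\<in>UNIV. dist x' x < d \<longrightarrow> dist (nrm x') (nrm x) < e"
    proof (intro exI[of _ "e / (M + 1)"] conjI ballI impI)
      show "e / (M + 1) > 0" using \<open>e > 0\<close> M0 by simp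
      fix x' assume "dist x' x < e / (M + 1)"
      hence "norm (x' - x) * (M + 1) < e" using M0 by (simp add: dist_norm field_simps)
      moreover have "M * norm (x' - x) \<le> norm (x' - x) * (M + 1)" using M0
        by (simp add: algebra_simps)
      ultimately show "dist (nrm x') (nrm x) < e" using L[of x' x] by (simp add: dist_real_def)
    qed
  qed
qed

lemma nrm_lower:
  fixes nrm :: "real ^ 'd \<Rightarrow> real"
  assumes "is_norm_fun nrm"
  shows "\<exists>k>0. \<forall>x. k * norm x \<le> nrm x"
proof -
  have h: "\<And>a x. nrm (a *\<^sub>R x) = \<bar>a\<bar> * nrm x" and z: "\<And>x. nrm x = 0 \<longleftrightarrow> x = 0"
    using assms unfolding is_norm_fun_def by auto
  have ne: "sphere (0::real^'d) 1 \<noteq> {}"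
    using norm_axis_1[of undefined] by (metis mem_sphere_0 empty_iff)
  obtain p where p: "p \<in> sphere 0 1" "\<forall>y\<in>sphere 0 1. nrm p \<le> nrm y"
    using continuous_attains_inf[OF compact_sphere ne continuous_on_subset[OF nrm_cont[OF assms]]]
    by auto
  have "p \<noteq> 0" using p(1) by auto
  hence kp: "nrm p > 0" using z[of p] nrm_basic(2)[OF assms, of p] by linarith
  show ?thesis
  proof (intro exI[of _ "nrm p"] conjI allI kp)
    fix x :: "real^'d"
    show "nrm p * norm x \<le> nrm x"
    proof (cases "x = 0")
      case True then show ?thesis by (simp add: nrm_basic[OF assms])
    next
      case False
      have "inverse (norm x) *\<^sub>R x \<in> sphere 0 1" using False by simp
      hence "nrm p \<le> nrm (inverse (norm x) *\<^sub>R x)" using p(2) by blast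
      also have "\<dots> = nrm x / norm x" using h by (simp add: field_simps)
      finally show ?thesis using False by (simp add: field_simps)
    qed
  qed
qed


lemma unit_ball_bound:
  fixes nrm :: "real ^ 'd \<Rightarrow> real"
  assumes "is_norm_fun nrm"
  shows "\<exists>R. \<forall>w. nrm w \<le> 1 \<longrightarrow> norm w \<le> R"
proof -
  obtain k where k: "k > 0" "\<forall>x. k * norm x \<le> nrm x" using nrm_lower[OF assms] by blast
  show ?thesis
  proof (intro exI[of _ "1/k"] allI impI)
    fix w assume "nrm w \<le> 1"
    hence "k * norm w \<le> 1" using k(2) by (meson order_trans)
    thus "norm w \<le> 1/k" using k(1) by (simp add: field_simps)
  qed
qed

lemma dual_bdd:
  fixes nrm :: "real ^ 'd \<Rightarrow> real"
  assumes "is_norm_fun nrm"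
  shows "bdd_above ((\<lambda>w. y \<bullet> w) ` {w. nrm w \<le> 1})"
proof -
  obtain R where R: "\<forall>w. nrm w \<le> 1 \<longrightarrow> norm w \<le> R" using unit_ball_bound[OF assms] by blast
  show ?thesis unfolding bdd_above_def
  proof (intro exI[of _ "norm y * R"] ballI)
    fix z assume "z \<in> (\<lambda>w. y \<bullet> w) ` {w. nrm w \<le> 1}"
    then obtain w where "nrm w \<le> 1" "z = y \<bullet> w" by auto
    thus "z \<le> norm y * R" using R norm_cauchy_schwarz[of y w]
      by (meson mult_left_mono norm_ge_zero order_trans)
  qed
qed

lemma dual_zero:
  fixes nrm :: "real ^ 'd \<Rightarrow> real"
  assumes "is_norm_fun nrm"
  shows "dual_norm nrm 0 = 0"
proof -
  have "{w. nrm w \<le> 1} \<noteq> {}" using nrm_basic(1)[OF assms] by (metis empty_iff mem_Collect_eq zero_less_one less_eq_real_def)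
  thus ?thesis unfolding dual_norm_def by simp
qed

lemma dual_pos:
  fixes nrm :: "real ^ 'd \<Rightarrow> real"
  assumes "is_norm_fun nrm" "y \<noteq> 0"
  shows "dual_norm nrm y > 0"
proof -
  have h: "\<And>a x. nrm (a *\<^sub>R x) = \<bar>a\<bar> * nrm x" and z: "\<And>x. nrm x = 0 \<longleftrightarrow> x = 0"
    using assms(1) unfolding is_norm_fun_def by auto
  have np: "nrm y > 0" using z[of y] nrm_basic(2)[OF assms(1), of y] assms(2) by linarith
  let ?w = "inverse (nrm y) *\<^sub>R y"
  have "nrm ?w = 1" using np h by simp
  hence "y \<bullet> ?w \<le> dual_norm nrm y" unfolding dual_norm_def
    by (intro cSUP_upper dual_bdd[OF assms(1)]) auto
  moreover have "y \<bullet> ?w > 0" using np assms(2) by simp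
  ultimately show ?thesis by linarith
qed

lemma v_bound:
  fixes nrm :: "real ^ 'd \<Rightarrow> real"
  assumes "is_norm_fun nrm" "is_selection nrm v"
  shows "bdd_above (range (\<lambda>y. norm (v y)))"
proof -
  obtain R where R: "\<forall>w. nrm w \<le> 1 \<longrightarrow> norm w \<le> R" using unit_ball_bound[OF assms(1)] by blast
  have "norm (v y) \<le> max R 0" for y
  proof (cases "y = 0")
    case True then show ?thesis using assms(2) unfolding is_selection_def by simp
  next
    case False
    then have "nrm (v y) \<le> 1" using assms(2) unfolding is_selection_def by simp
    then show ?thesis using R by fastforce
  qed
  thus ?thesis by (intro bdd_aboveI2) auto
qed


lemma inner_orthant_nonneg:
  fixes x y :: "real ^ 'd"
  assumes "x \<in> nonneg_orthant" "y \<in> nonneg_orthant"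
  shows "x \<bullet> y \<ge> 0"
  using assms unfolding nonneg_orthant_def inner_vec_def
  by (auto intro!: sum_nonneg)

lemma mistake_neg:
  fixes nrm :: "real ^ 'd \<Rightarrow> real"
  assumes norm: "is_norm_fun nrm" and sel: "is_selection nrm v" and c: "c > 0"
    and lab: "lab A = 1 \<or> lab A = -1"
    and mis: "is_mistake nrm c v lab A (y, b)"
  shows "lab A * (y \<bullet> proxy nrm c v lab A y b + b) \<le> 0"
proof (cases "y = 0")
  case True
  have "dual_norm nrm y = 0" using True dual_zero[OF norm] by simp
  then show ?thesis using mis lab True
    unfolding is_mistake_def pred_label_def response_def proxy_def sgn1_def
    by (auto split: if_splits)
next
  case False
  define dn where "dn = dual_norm nrm y"
  have dn: "dn > 0" using dual_pos[OF norm False] dn_def by simp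
  have yv: "y \<bullet> v y = dn" using sel False unfolding is_selection_def dn_def by simp
  define u where "u = (y \<bullet> A + b) / dn"
  have ud: "u * dn = y \<bullet> A + b" using dn unfolding u_def by simp
  have resp: "response nrm c v A y b = (if 0 \<le> u \<and> u < 2 / c then A + (2 / c - u) *\<^sub>R v y else A)"
    unfolding response_def u_def dn_def using False by (simp add: Let_def)
  have prox: "proxy nrm c v lab A y b = (if 0 \<le> u \<and> u < 2 / c \<and> lab A = -1 then A - u *\<^sub>R v y
            else if 0 \<le> u \<and> u < 2 / c \<and> lab A = 1 then A + (2 / c - u) *\<^sub>R v y else A)"
    unfolding proxy_def u_def dn_def using False by (simp add: Let_def)
  have pl: "pred_label nrm c x y b = sgn1 (y \<bullet> x + b - 2 * dn / c)" for x
    unfolding pred_label_def dn_def by simp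
  have mis': "sgn1 (y \<bullet> response nrm c v A y b + b - 2 * dn / c) \<noteq> lab A"
    using mis unfolding is_mistake_def by (simp add: pl)
  show ?thesis
  proof (cases "0 \<le> u \<and> u < 2 / c")
    case True
    have r: "response nrm c v A y b = A + (2 / c - u) *\<^sub>R v y" using True resp by simp
    have "y \<bullet> response nrm c v A y b + b - 2 * dn / c = y \<bullet> A + b - u * dn"
      unfolding r using yv by (simp add: inner_add_right algebra_simps)
    hence "y \<bullet> response nrm c v A y b + b - 2 * dn / c = 0" using ud by simp
    hence "lab A = -1" using mis' lab unfolding sgn1_def by auto
    have p: "proxy nrm c v lab A y b = A - u *\<^sub>R v y" using True prox \<open>lab A = -1\<close> by simp
    have "y \<bullet> proxy nrm c v lab A y b + b = y \<bullet> A + b - u * dn"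
      unfolding p using yv by (simp add: inner_diff_right algebra_simps)
    then show ?thesis using ud \<open>lab A = -1\<close> by simp
  next
    case nr: False
    have r: "response nrm c v A y b = A" using resp nr by simp
    have p: "proxy nrm c v lab A y b = A" using prox nr by auto
    have e: "y \<bullet> A + b - 2 * dn / c = (u - 2/c) * dn" using ud by (simp add: algebra_simps)
    show ?thesis
    proof (cases "lab A = 1")
      case True
      hence "(u - 2/c) * dn < 0" using mis' r e unfolding sgn1_def by (auto split: if_splits)
      hence "u < 2/c" using dn by (simp add: mult_less_0_iff)
      hence "u < 0" using nr by linarith
      hence "u * dn < 0" using dn by (simp add: mult_less_0_iff)
      then show ?thesis using True p ud by simp
    next
      case False
      hence l: "lab A = -1" using lab by simp
      hence "(u - 2/c) * dn \<ge> 0" using mis' r e unfolding sgn1_def by (auto split: if_splits)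
      hence "u \<ge> 2/c" using dn by (simp add: zero_le_mult_iff)
      moreover have "2 / c > 0" using c by simp
      ultimately have "u > 0" by linarith
      hence "u * dn \<ge> 0" using dn by simp
      then show ?thesis using l p ud by simp
    qed
  qed
qed

lemma proxy_margin:
  fixes nrm :: "real ^ 'd \<Rightarrow> real"
  assumes lab: "lab A = 1 \<or> lab A = -1"
    and y: "y \<in> nonneg_orthant" and ys: "ys \<in> nonneg_orthant"
    and vp: "\<forall>y\<in>nonneg_orthant. v y \<in> nonneg_orthant"
    and m: "lab A * (ys \<bullet> A + bs) \<ge> m"
  shows "lab A * (ys \<bullet> proxy nrm c v lab A y b + bs) \<ge> m"
proof -
  have vv: "ys \<bullet> v y \<ge> 0" using inner_orthant_nonneg[OF ys] vp y by blast
  define u where "u = (y \<bullet> A + b) / dual_norm nrm y"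
  have prox: "proxy nrm c v lab A y b = (if y = 0 then A else if 0 \<le> u \<and> u < 2 / c \<and> lab A = -1 then A - u *\<^sub>R v y
            else if 0 \<le> u \<and> u < 2 / c \<and> lab A = 1 then A + (2 / c - u) *\<^sub>R v y else A)"
    unfolding proxy_def u_def by (simp add: Let_def)
  consider "y = 0 \<or> \<not> (0 \<le> u \<and> u < 2 / c)" | "0 \<le> u \<and> u < 2 / c" "lab A = -1" | "0 \<le> u \<and> u < 2 / c" "lab A = 1"
    using lab by blast
  then show ?thesis
  proof cases
    case 1 then show ?thesis using prox m lab by auto
  next
    case 2
    have "u * (ys \<bullet> v y) \<ge> 0" using 2 vv by simp
    then show ?thesis using 2 prox m lab by (auto simp: inner_diff_right algebra_simps)
  next
    case 3
    have "(2/c - u) * (ys \<bullet> v y) \<ge> 0" using 3 vv by simp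
    then show ?thesis using 3 prox m lab by (auto simp: inner_add_right algebra_simps)
  qed
qed

lemma proxy_norm:
  assumes "c > 0" "\<And>y. norm (v y) \<le> Cn"
  shows "norm (proxy nrm c v lab A y b) \<le> norm A + 2 / c * Cn"
proof -
  have C0: "Cn \<ge> 0" using assms(2)[of y] norm_ge_zero order_trans by blast
  have base: "norm A \<le> norm A + 2 / c * Cn" using C0 assms(1) by simp
  define u where "u = (y \<bullet> A + b) / dual_norm nrm y"
  have prox: "proxy nrm c v lab A y b = (if y = 0 then A else if 0 \<le> u \<and> u < 2 / c \<and> lab A = -1 then A - u *\<^sub>R v y
            else if 0 \<le> u \<and> u < 2 / c \<and> lab A = 1 then A + (2 / c - u) *\<^sub>R v y else A)"
    unfolding proxy_def u_def by (simp add: Let_def)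
  have t: "norm (A + w *\<^sub>R v y) \<le> norm A + 2 / c * Cn" if "\<bar>w\<bar> \<le> 2 / c" for w
  proof -
    have "norm (A + w *\<^sub>R v y) \<le> norm A + \<bar>w\<bar> * norm (v y)" using norm_triangle_ineq[of A "w *\<^sub>R v y"] by simp
    also have "\<bar>w\<bar> * norm (v y) \<le> 2 / c * Cn" using that assms(2)[of y] C0 assms(1)
      by (intro mult_mono) auto
    finally show ?thesis by simp
  qed
  show ?thesis
  proof (cases "y \<noteq> 0 \<and> 0 \<le> u \<and> u < 2 / c \<and> (lab A = -1 \<or> lab A = 1)")
    case True
    show ?thesis
    proof (cases "lab A = -1")
      case True2: True
      then show ?thesis using True prox t[of "-u"] by simp
    next
      case False
      then show ?thesis using True prox t[of "2/c - u"] by simp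
    qed
  next
    case False then show ?thesis using prox base by auto
  qed
qed


lemma orthant_closed: "closed (nonneg_orthant :: (real^'d) set)"
  unfolding nonneg_orthant_def by (rule closed_positive_orthant)

lemma orthant_convex: "convex (nonneg_orthant :: (real^'d) set)"
  unfolding convex_def nonneg_orthant_def by auto

lemma orthant_add: "x \<in> nonneg_orthant \<Longrightarrow> y \<in> nonneg_orthant \<Longrightarrow> x + y \<in> nonneg_orthant"
  unfolding nonneg_orthant_def by auto

lemma orthant_scale: "x \<in> nonneg_orthant \<Longrightarrow> a \<ge> 0 \<Longrightarrow> a *\<^sub>R x \<in> nonneg_orthant"
  unfolding nonneg_orthant_def by auto

lemma orthant_zero: "0 \<in> nonneg_orthant"
  unfolding nonneg_orthant_def by auto

lemma proj_props:
  fixes z qq :: "(real^'d) \<times> real"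
  defines "L \<equiv> nonneg_orthant \<times> (UNIV :: real set)"
  assumes "qq \<in> L"
  shows "qq \<bullet> closest_point L z \<ge> qq \<bullet> z" "norm (closest_point L z) \<le> norm z"
    "closest_point L z \<in> L"
proof -
  have cl: "closed L" unfolding L_def by (intro closed_Times orthant_closed) auto
  have cv: "convex L" unfolding L_def by (intro convex_Times orthant_convex) auto
  have ne: "L \<noteq> {}" using assms(2) by auto
  define p where "p = closest_point L z"
  have pL: "p \<in> L" unfolding p_def by (rule closest_point_in_set[OF cl ne])
  then show "closest_point L z \<in> L" unfolding p_def .
  have memL: "x \<in> L \<longleftrightarrow> fst x \<in> nonneg_orthant" for x unfolding L_def by (cases x) auto
  have d: "(z - p) \<bullet> (x - p) \<le> 0" if "x \<in> L" for x
    unfolding p_def by (rule closest_point_dot[OF cv cl that])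
  have "(z - p) \<bullet> (0 - p) \<le> 0" by (rule d) (simp add: memL orthant_zero)
  moreover have "(z - p) \<bullet> (2 *\<^sub>R p - p) \<le> 0" by (rule d) (use pL memL orthant_scale[of "fst p" 2] in auto)
  ultimately have o: "(z - p) \<bullet> p = 0"
    by (simp add: inner_diff_right scaleR_2 inner_add_right)
  have "(z - p) \<bullet> ((qq + p) - p) \<le> 0" by (rule d) (use pL assms(2) memL orthant_add in auto)
  hence "(z - p) \<bullet> qq \<le> 0" by simp
  hence "qq \<bullet> z - qq \<bullet> p \<le> 0" by (simp add: inner_diff_right inner_commute)
  thus "qq \<bullet> closest_point L z \<ge> qq \<bullet> z" unfolding p_def[symmetric] by simp
  have "(norm z)^2 = (norm p)^2 + (norm (z - p))^2 + 2 * ((z - p) \<bullet> p)"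
  proof -
    have "z \<bullet> z = p \<bullet> p + (z - p) \<bullet> (z - p) + 2 * ((z - p) \<bullet> p)"
      by (simp add: inner_diff_left inner_diff_right inner_commute[of p z] algebra_simps)
    thus ?thesis by (simp add: power2_norm_eq_inner)
  qed
  hence "(norm p)^2 \<le> (norm z)^2" using o by simp
  thus "norm (closest_point L z) \<le> norm z" unfolding p_def[symmetric]
    using power2_le_imp_le norm_ge_zero by blast
qed

lemma card_less_Suc: "card {t. t < Suc n \<and> P t} = card {t. t < n \<and> P t} + (if P n then 1 else 0)"
proof -
  have "{t. t < Suc n \<and> P t} = (if P n then insert n {t. t < n \<and> P t} else {t. t < n \<and> P t})"
    by (auto simp: less_Suc_eq)
  thus ?thesis by auto
qed


theorem mainTheorem19:
  fixes nrm :: "real ^ 'd \<Rightarrow> real" and v :: "real ^ 'd \<Rightarrow> real ^ 'd"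
    and lab :: "real ^ 'd \<Rightarrow> real" and \<A> :: "(real ^ 'd) set"
    and c :: real and ystar :: "real ^ 'd" and bstar dstar :: real
    and A :: "nat \<Rightarrow> real ^ 'd" and T :: nat
  assumes norm: "is_norm_fun nrm"
    and sel: "is_selection nrm v"
    and c_pos: "c > 0"
    and labels: "\<forall>A\<in>\<A>. lab A = 1 \<or> lab A = -1"
    and ystar_ne: "ystar \<noteq> 0"
    and dstar_def: "dstar = margin_of nrm lab \<A> ystar bstar"
    and dstar_max: "\<forall>y b. y \<noteq> 0 \<longrightarrow> margin_of nrm lab \<A> y b \<le> dstar"
    and dstar_pos: "dstar > 0"
    and ystar_pos: "ystar \<in> nonneg_orthant"
    and bnd: "bounded \<A>"
    and v_pos: "\<forall>y\<in>nonneg_orthant. v y \<in> nonneg_orthant"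
    and agents: "\<forall>t\<le>T. A t \<in> \<A>"
  defines "L \<equiv> nonneg_orthant \<times> (UNIV :: real set)"
    and "D \<equiv> (SUP B\<in>\<A>. norm B)"
    and "Cn \<equiv> (SUP y. norm (v y))"
  defines "Dt \<equiv> D + 2 / c * Cn"
  shows "(\<Sum>t\<in>mistake_set nrm c v lab L 1 A T.
            hinge ((1 / (dstar * dual_norm nrm ystar)) *\<^sub>R ystar, bstar / (dstar * dual_norm nrm ystar))
                  (proxy nrm c v lab (A t) (fst (perceptron nrm c v lab L 1 A t))
                                        (snd (perceptron nrm c v lab L 1 A t)), 1)
                  (lab (A t))) \<le> 0
       \<and> real (card (mistake_set nrm c v lab L 1 A T))
           \<le> (norm ystar ^ 2 + bstar ^ 2) * (Dt ^ 2 + 1) / (dual_norm nrm ystar ^ 2 * dstar ^ 2)"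
proof -
  define dn where "dn = dual_norm nrm ystar"
  have dn: "dn > 0" unfolding dn_def by (rule dual_pos[OF norm ystar_ne])
  define a where "a = 1 / (dstar * dn)"
  have a: "a > 0" unfolding a_def using dn dstar_pos by simp
  define qs where "qs = (a *\<^sub>R ystar, bstar / (dstar * dn))"
  define q where "q = perceptron nrm c v lab L 1 A"
  define xi where "xi t = (proxy nrm c v lab (A t) (fst (q t)) (snd (q t)), 1::real)" for t
  define mis where "mis t = is_mistake nrm c v lab (A t) (q t)" for t
  obtain R where R: "\<forall>B\<in>\<A>. norm B \<le> R" using bnd unfolding bounded_iff by blast
  have bb: "bdd_below ((\<lambda>B. lab B * (ystar \<bullet> B + bstar) / dn) ` \<A>)"
  proof (rule bdd_belowI2)
    fix B assume B: "B \<in> \<A>"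
    have "\<bar>ystar \<bullet> B + bstar\<bar> \<le> norm ystar * R + \<bar>bstar\<bar>"
    proof -
      have "\<bar>ystar \<bullet> B\<bar> \<le> norm ystar * norm B" by (rule Cauchy_Schwarz_ineq2)
      also have "\<dots> \<le> norm ystar * R" using R B by (simp add: mult_left_mono)
      finally show ?thesis by linarith
    qed
    moreover have "\<bar>lab B\<bar> = 1" using labels B by auto
    ultimately have "\<bar>lab B * (ystar \<bullet> B + bstar)\<bar> \<le> norm ystar * R + \<bar>bstar\<bar>" by (simp add: abs_mult)
    hence "- (norm ystar * R + \<bar>bstar\<bar>) \<le> lab B * (ystar \<bullet> B + bstar)" by linarith
    thus "- (norm ystar * R + \<bar>bstar\<bar>) / dn \<le> lab B * (ystar \<bullet> B + bstar) / dn"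
      using dn by (simp add: divide_right_mono)
  qed
  have marg: "lab B * (ystar \<bullet> B + bstar) \<ge> dstar * dn" if "B \<in> \<A>" for B
  proof -
    have "dstar \<le> lab B * (ystar \<bullet> B + bstar) / dn"
      unfolding dstar_def margin_of_def dn_def[symmetric] using bb that by (rule cINF_lower)
    thus ?thesis using dn by (simp add: field_simps)
  qed
  have qL: "q t \<in> L" for t
  proof (cases t)
    case 0 then show ?thesis by (simp add: q_def L_def orthant_zero)
  next
    case (Suc n)
    have "closest_point L z \<in> L" for z
      using proj_props(3)[of "(0, 0)" z] by (simp add: L_def orthant_zero)
    then show ?thesis unfolding Suc q_def by (simp add: Let_def L_def)
  qed
  have qfst: "fst (q t) \<in> nonneg_orthant" for t using qL[of t] unfolding L_def by (cases "q t") auto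
  have qsL: "qs \<in> L" unfolding qs_def L_def using orthant_scale[OF ystar_pos] a by simp
  have labA: "lab (A t) = 1 \<or> lab (A t) = -1" if "t \<le> T" for t using labels agents that by blast
  have good: "lab (A t) * (qs \<bullet> xi t) \<ge> 1" if "t \<le> T" for t
  proof -
    have "lab (A t) * (ystar \<bullet> proxy nrm c v lab (A t) (fst (q t)) (snd (q t)) + bstar) \<ge> dstar * dn"
      using proxy_margin[where lab=lab and A="A t" and v=v and y="fst (q t)" and ys=ystar and bs=bstar and m="dstar * dn",
          OF labA[OF that] qfst[of t] ystar_pos v_pos] marg[of "A t"] agents that by auto
    moreover have "lab (A t) * (qs \<bullet> xi t) = a * (lab (A t) * (ystar \<bullet> proxy nrm c v lab (A t) (fst (q t)) (snd (q t)) + bstar))"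
      unfolding qs_def xi_def a_def by (simp add: algebra_simps)
    moreover have "a * (dstar * dn) = 1" unfolding a_def using dn dstar_pos by simp
    ultimately show ?thesis using a by (metis mult_left_mono less_imp_le)
  qed
  have ms: "mistake_set nrm c v lab L 1 A T = {t. t < Suc T \<and> mis t}"
    unfolding mistake_set_def mis_def q_def by auto
  have part1: "(\<Sum>t\<in>mistake_set nrm c v lab L 1 A T. hinge qs (xi t) (lab (A t))) \<le> 0"
  proof (rule sum_nonpos)
    fix t assume "t \<in> mistake_set nrm c v lab L 1 A T"
    hence "t \<le> T" using ms by auto
    thus "hinge qs (xi t) (lab (A t)) \<le> 0" using good[of t] unfolding hinge_def by simp
  qed
  have Cnb: "norm (v y) \<le> Cn" for y unfolding Cn_def by (rule cSUP_upper[OF _ v_bound[OF norm sel]]) simp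
  have Db: "norm B \<le> D" if "B \<in> \<A>" for B
    unfolding D_def by (rule cSUP_upper[OF that]) (use R in \<open>auto intro: bdd_aboveI2\<close>)
  have xib: "xi t \<bullet> xi t \<le> Dt^2 + 1" if "t \<le> T" for t
  proof -
    have "norm (proxy nrm c v lab (A t) (fst (q t)) (snd (q t))) \<le> norm (A t) + 2 / c * Cn"
      by (rule proxy_norm[OF c_pos Cnb])
    also have "\<dots> \<le> Dt" unfolding Dt_def using Db agents that by simp
    finally have "(norm (proxy nrm c v lab (A t) (fst (q t)) (snd (q t))))^2 \<le> Dt^2"
      by (meson norm_ge_zero power_mono)
    thus ?thesis unfolding xi_def by (simp add: power2_norm_eq_inner)
  qed
  define K where "K = Dt^2 + 1"
  define cnt where "cnt n = card {t. t < n \<and> mis t}" for n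
  have ind: "qs \<bullet> q n \<ge> real (cnt n) \<and> (norm (q n))^2 \<le> real (cnt n) * K" if "n \<le> Suc T" for n
    using that
  proof (induction n)
    case 0 then show ?case by (simp add: q_def cnt_def inner_Pair_0)
  next
    case (Suc n)
    hence nT: "n \<le> T" by simp
    from Suc have IH: "qs \<bullet> q n \<ge> real (cnt n)" "(norm (q n))^2 \<le> real (cnt n) * K" by auto
    define z where "z = (if mis n then q n + lab (A n) *\<^sub>R xi n else q n)"
    have qS: "q (Suc n) = closest_point L z"
      unfolding q_def z_def mis_def xi_def by (simp add: Let_def)
    have p1: "qs \<bullet> q (Suc n) \<ge> qs \<bullet> z" "norm (q (Suc n)) \<le> norm z"
      unfolding qS L_def using proj_props[of qs z] qsL L_def by auto
    have cS: "cnt (Suc n) = cnt n + (if mis n then 1 else 0)" unfolding cnt_def by (rule card_less_Suc)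
    show ?case
    proof (cases "mis n")
      case True
      have l2: "lab (A n) * lab (A n) = 1" using labA[OF nT] by auto
      have "qs \<bullet> z = qs \<bullet> q n + lab (A n) * (qs \<bullet> xi n)" using True unfolding z_def by (simp add: inner_add_right)
      hence e1: "qs \<bullet> z \<ge> real (cnt n) + 1" using IH good[OF nT] by linarith
      have neg: "lab (A n) * (q n \<bullet> xi n) \<le> 0"
      proof -
        have "lab (A n) * (fst (q n) \<bullet> proxy nrm c v lab (A n) (fst (q n)) (snd (q n)) + snd (q n)) \<le> 0"
        proof -
          have "is_mistake nrm c v lab (A n) (fst (q n), snd (q n))" using True unfolding mis_def by simp
          thus ?thesis by (rule mistake_neg[where lab=lab and A="A n", OF norm sel c_pos labA[OF nT]])
        qed
        moreover have "q n \<bullet> xi n = fst (q n) \<bullet> proxy nrm c v lab (A n) (fst (q n)) (snd (q n)) + snd (q n)"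
          unfolding xi_def by (cases "q n") simp
        ultimately show ?thesis by simp
      qed
      have "z \<bullet> z = q n \<bullet> q n + 2 * (lab (A n) * (q n \<bullet> xi n)) + (lab (A n) * lab (A n)) * (xi n \<bullet> xi n)"
        using True unfolding z_def by (simp add: inner_add_left inner_add_right inner_commute[of "xi n" "q n"] algebra_simps)
      hence "(norm z)^2 \<le> (norm (q n))^2 + K" using neg l2 xib[OF nT] unfolding K_def
        by (simp add: power2_norm_eq_inner)
      moreover have "(norm (q (Suc n)))^2 \<le> (norm z)^2" using p1(2) by (simp add: power_mono)
      moreover have "real (cnt (Suc n)) * K = real (cnt n) * K + K" using cS True by (simp add: algebra_simps)
      ultimately have "(norm (q (Suc n)))^2 \<le> real (cnt (Suc n)) * K" using IH(2) by linarith
      moreover have "qs \<bullet> q (Suc n) \<ge> real (cnt (Suc n))" using p1(1) e1 cS True by simp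
      ultimately show ?thesis by simp
    next
      case False
      have zq: "z = q n" using False unfolding z_def by simp
      have sq: "(norm (q (Suc n)))^2 \<le> (norm (q n))^2" using p1(2) zq norm_ge_zero power_mono by metis
      have cc: "real (cnt (Suc n)) = real (cnt n)" using cS False by simp
      have "qs \<bullet> q (Suc n) \<ge> real (cnt (Suc n))" using p1(1) IH(1) cc unfolding zq by linarith
      moreover have "(norm (q (Suc n)))^2 \<le> real (cnt (Suc n)) * K" using sq IH(2) unfolding cc by linarith
      ultimately show ?thesis by blast
    qed
  qed
  define M where "M = real (card (mistake_set nrm c v lab L 1 A T))"
  have MM: "M = real (cnt (Suc T))" unfolding M_def cnt_def ms ..
  from ind[of "Suc T"] MM have f1: "qs \<bullet> q (Suc T) \<ge> M" "(norm (q (Suc T)))^2 \<le> M * K" by auto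
  have qsn: "(norm qs)^2 = (norm ystar ^ 2 + bstar ^ 2) / (dn ^ 2 * dstar ^ 2)"
  proof -
    have "(norm qs)^2 = qs \<bullet> qs" by (simp add: power2_norm_eq_inner)
    also have "\<dots> = a^2 * (ystar \<bullet> ystar) + (bstar / (dstar * dn))^2"
      unfolding qs_def by (simp add: power2_eq_square)
    also have "\<dots> = a^2 * (norm ystar)^2 + (bstar / (dstar * dn))^2"
      by (simp add: power2_norm_eq_inner)
    also have "\<dots> = (norm ystar ^ 2 + bstar ^ 2) / (dn ^ 2 * dstar ^ 2)"
      unfolding a_def by (simp add: power_divide power_mult_distrib add_divide_distrib mult.commute)
    finally show ?thesis .
  qed
  have K0: "K \<ge> 1" unfolding K_def by simp
  have part2: "M \<le> (norm qs)^2 * K"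
  proof (cases "M = 0")
    case True then show ?thesis using K0 by simp
  next
    case False
    hence Mp: "M > 0" unfolding M_def by simp
    have "M \<le> norm qs * norm (q (Suc T))" using f1(1) norm_cauchy_schwarz[of qs "q (Suc T)"] by linarith
    hence "M^2 \<le> (norm qs * norm (q (Suc T)))^2" using Mp by (simp add: power_mono)
    also have "\<dots> = (norm qs)^2 * (norm (q (Suc T)))^2" by (simp add: power_mult_distrib)
    also have "\<dots> \<le> (norm qs)^2 * (M * K)" using f1(2) by (simp add: mult_left_mono)
    finally have "M * M \<le> M * ((norm qs)^2 * K)" by (simp add: power2_eq_square algebra_simps)
    thus ?thesis using Mp by simp
  qed
  show ?thesis
  proof
    show "(\<Sum>t\<in>mistake_set nrm c v lab L 1 A T.
            hinge ((1 / (dstar * dual_norm nrm ystar)) *\<^sub>R ystar, bstar / (dstar * dual_norm nrm ystar))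
                  (proxy nrm c v lab (A t) (fst (perceptron nrm c v lab L 1 A t))
                                        (snd (perceptron nrm c v lab L 1 A t)), 1)
                  (lab (A t))) \<le> 0"
      using part1 unfolding qs_def xi_def q_def a_def dn_def .
    show "real (card (mistake_set nrm c v lab L 1 A T))
           \<le> (norm ystar ^ 2 + bstar ^ 2) * (Dt ^ 2 + 1) / (dual_norm nrm ystar ^ 2 * dstar ^ 2)"
      using part2 unfolding M_def qsn K_def dn_def by simp
  qed
qed

end
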